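(* In the $2$-coloured operad $\mathrm{Bulle}$, the set $G$ of the eight bubbles of arity $2$ is the generating set of $\mathrm{Bulle}$. That is, the smallest coloured suboperad of $\mathrm{Bulle}$ containing $G$ is $\mathrm{Bulle}$ itself, and $G$ is minimal for inclusion with this property.
   Context: The $2$-coloured operad $\mathrm{Bulle}$ can be described as follows. For $n\ge2$, its elements of arity $n$ (called bubbles) are the pairs $(c;d_1\cdots d_n)$ with $c\in\{1,2\}$ and $d_1,\dots,d_n\in\{1,2\}$, with output colour $c$ and $i$th input colour $d_i$. In addition, there are two units $\mathbf 1_1,\mathbf 1_2$ of arity $1$, where $\mathbf 1_c$ has output and input colour $c$. The partial composition $(c;d_1\cdots d_n)\circ_i(e;f_1\cdots f_m)$ is defined exactly when $d_i=e$, and equals $(c;d_1\cdots d_{i-1}f_1\cdots f_m d_{i+1}\cdots d_n)$. Geometrically, a bubble of arity $n$ is a polygon with $n+1$ vertices whose base and $n$ edges are each either blue or uncoloured, with no coloured diagonals. The output colour is $1$ iff the base is blue, and the $i$th input colour is $2$ iff the $i$th edge is blue. Composition glues the base of the second bubble onto the $i$th edge of the first. A coloured suboperad is a subset closed under defined compositions and containing both units. *)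

theory Defs
  imports Main
begin

datatype colour = C1 | C2

text \<open>An element of the 2-coloured operad Bulle: (output colour, list of input colours).\<close>
type_synonym bubble = "colour \<times> colour list"

definition unit_elt :: "colour \<Rightarrow> bubble" where
  "unit_elt c = (c, [c])"

definition Bulle :: "bubble set" where
  "Bulle = {x. length (snd x) \<ge> 2} \<union> {unit_elt C1, unit_elt C2}"

definition arity :: "bubble \<Rightarrow> nat" where
  "arity x = length (snd x)"

text \<open>Partial composition x o_(i+1) y (positions 0-indexed); defined when
  i < arity x and the i-th input colour of x equals the output colour of y.\<close>
definition comp_defined :: "bubble \<Rightarrow> nat \<Rightarrow> bubble \<Rightarrow> bool" where
  "comp_defined x i y \<longleftrightarrow> i < length (snd x) \<and> snd x ! i = fst y"

definition pcomp :: "bubble \<Rightarrow> nat \<Rightarrow> bubble \<Rightarrow> bubble" where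
  "pcomp x i y = (fst x, take i (snd x) @ snd y @ drop (Suc i) (snd x))"

definition is_suboperad :: "bubble set \<Rightarrow> bool" where
  "is_suboperad S \<longleftrightarrow> S \<subseteq> Bulle \<and> unit_elt C1 \<in> S \<and> unit_elt C2 \<in> S \<and>
     (\<forall>x\<in>S. \<forall>y\<in>S. \<forall>i. comp_defined x i y \<longrightarrow> pcomp x i y \<in> S)"

definition generated_suboperad :: "bubble set \<Rightarrow> bubble set" where
  "generated_suboperad G = \<Inter>{S. is_suboperad S \<and> G \<subseteq> S}"

definition arity2_bubbles :: "bubble set" where
  "arity2_bubbles = {x \<in> Bulle. arity x = 2}"

end

theory Submission
  imports Defs
begin

lemma A2: "arity2_bubbles = {(c,[a,b]) | c a b. True}"
  unfolding arity2_bubbles_def Bulle_def arity_def unit_elt_def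
  by (auto simp: length_Suc_conv numeral_2_eq_2)

lemma A2exp: "arity2_bubbles = (\<lambda>(c,a,b). (c,[a,b])) ` (UNIV \<times> UNIV \<times> UNIV)"
  unfolding A2 by (auto simp: image_iff)

lemma UNIV_colour: "(UNIV :: colour set) = {C1, C2}"
  using colour.exhaust by auto

lemma mem8: "(c,[a,b]) \<in> {(C1,[C1,C1]),(C1,[C1,C2]),(C1,[C2,C1]),(C1,[C2,C2]),
      (C2,[C1,C1]),(C2,[C1,C2]),(C2,[C2,C1]),(C2,[C2,C2])}"
  by (cases c; cases a; cases b) auto

lemma card8: "card arity2_bubbles = 8"
proof -
  have "arity2_bubbles = {(C1,[C1,C1]),(C1,[C1,C2]),(C1,[C2,C1]),(C1,[C2,C2]),
      (C2,[C1,C1]),(C2,[C1,C2]),(C2,[C2,C1]),(C2,[C2,C2])}" (is "_ = ?E")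
  proof
    show "arity2_bubbles \<subseteq> ?E" 
    proof
      fix x assume "x \<in> arity2_bubbles"
      then obtain c a b where "x = (c,[a,b])" unfolding A2 by blast
      then show "x \<in> ?E" using mem8 by (simp only:)
    qed
  qed (auto simp: A2)
  moreover have "card ?E = 8" by simp
  ultimately show ?thesis by (rule ssubst)
qed

lemma gen_le: "is_suboperad S \<Longrightarrow> G \<subseteq> S \<Longrightarrow> generated_suboperad G \<subseteq> S"
  unfolding generated_suboperad_def by auto

lemma len_pcomp: "i < length (snd x) \<Longrightarrow>
   length (snd (pcomp x i y)) = length (snd x) + length (snd y) - 1"
  unfolding pcomp_def by auto

lemma Bulle_sub: "is_suboperad Bulle"
  unfolding is_suboperad_def
proof (intro conjI ballI allI impI)
  fix x y i assume x: "x \<in> Bulle" and y: "y \<in> Bulle" and d: "comp_defined x i y"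
  obtain c ds where xe: "x = (c, ds)" by (cases x)
  obtain e es where ye: "y = (e, es)" by (cases y)
  have i: "i < length ds" "ds ! i = e" using d xe ye by (auto simp: comp_defined_def)
  show "pcomp x i y \<in> Bulle"
  proof (cases "length ds \<ge> 2")
    case True
    have "length es \<ge> 1" using y ye by (auto simp: Bulle_def unit_elt_def)
    then show ?thesis using True i xe ye len_pcomp[of i x y] by (auto simp: Bulle_def)
  next
    case False
    then obtain c' where "x = (c', [c'])" using x xe by (auto simp: Bulle_def unit_elt_def)
    then have "pcomp x i y = (e, es)" using i xe ye by (auto simp: pcomp_def)
    then show ?thesis using y ye by simp
  qed
qed (auto simp: Bulle_def unit_elt_def)

lemma all_in: "is_suboperad S \<Longrightarrow> arity2_bubbles \<subseteq> S \<Longrightarrow>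
   length ds = n \<Longrightarrow> n \<ge> 2 \<Longrightarrow> (c, ds) \<in> S"
proof (induction n arbitrary: c ds rule: less_induct)
  case (less n)
  then obtain d1 d2 rest where ds: "ds = d1 # d2 # rest"
    by (metis Suc_le_length_iff numeral_2_eq_2)
  show ?case
  proof (cases rest)
    case Nil
    then show ?thesis using less.prems ds unfolding A2 by auto
  next
    case (Cons r rs)
    have "(C1, d2 # rest) \<in> S" using less.IH[of "length (d2 # rest)" "d2 # rest" C1] less.prems Cons ds by auto
    moreover have "(c, [d1, C1]) \<in> S" using less.prems unfolding A2 by auto
    ultimately have "pcomp (c, [d1, C1]) 1 (C1, d2 # rest) \<in> S"
      using less.prems(1) unfolding is_suboperad_def comp_defined_def by fastforce
    then show ?thesis using ds by (simp add: pcomp_def)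
  qed
qed

lemma gen_all: "generated_suboperad arity2_bubbles = Bulle"
proof
  show "generated_suboperad arity2_bubbles \<subseteq> Bulle"
    by (rule gen_le[OF Bulle_sub]) (auto simp: arity2_bubbles_def)
  show "Bulle \<subseteq> generated_suboperad arity2_bubbles"
  proof
    fix x assume x: "x \<in> Bulle"
    show "x \<in> generated_suboperad arity2_bubbles"
      unfolding generated_suboperad_def
    proof (intro InterI, clarify)
      fix S assume S: "is_suboperad S" "arity2_bubbles \<subseteq> S"
      obtain c ds where xe: "x = (c, ds)" by (cases x)
      show "x \<in> S"
      proof (cases "length ds \<ge> 2")
        case True then show ?thesis using all_in[OF S] xe by auto
      next
        case False
        then have "x = unit_elt C1 \<or> x = unit_elt C2" using x xe by (auto simp: Bulle_def)
        then show ?thesis using S(1) by (auto simp: is_suboperad_def)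
      qed
    qed
  qed
qed

lemma minus_sub:
  assumes g: "g \<in> arity2_bubbles"
  shows "is_suboperad (Bulle - {g})"
  unfolding is_suboperad_def
proof (intro conjI ballI allI impI)
  have gl: "length (snd g) = 2" using g by (auto simp: arity2_bubbles_def arity_def)
  show "unit_elt C1 \<in> Bulle - {g}" "unit_elt C2 \<in> Bulle - {g}"
    using gl by (auto simp: Bulle_def unit_elt_def)
  fix x y i assume x: "x \<in> Bulle - {g}" and y: "y \<in> Bulle - {g}" and d: "comp_defined x i y"
  have inB: "pcomp x i y \<in> Bulle" using Bulle_sub x y d unfolding is_suboperad_def by blast
  obtain c ds where xe: "x = (c, ds)" by (cases x)
  obtain e es where ye: "y = (e, es)" by (cases y)
  have i: "i < length ds" "ds ! i = e" using d xe ye by (auto simp: comp_defined_def)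
  have ne: "pcomp x i y \<noteq> g"
  proof (cases "length ds \<ge> 2")
    case False
    then obtain c' where "x = (c', [c'])" using x xe by (auto simp: Bulle_def unit_elt_def)
    then have "pcomp x i y = y" using i xe ye by (auto simp: pcomp_def)
    then show ?thesis using y by auto
  next
    case True
    show ?thesis
    proof (cases "length es \<ge> 2")
      case True
      then have "length (snd (pcomp x i y)) \<ge> 3"
        using \<open>2 \<le> length ds\<close> len_pcomp[of i x y] i xe ye by auto
      then show ?thesis using gl by auto
    next
      case False
      then have "es = [e]" using y ye by (auto simp: Bulle_def unit_elt_def)
      have "take i ds @ e # drop (Suc i) ds = ds[i := ds ! i]"
        using i by (simp add: upd_conv_take_nth_drop)
      then have "take i ds @ e # drop (Suc i) ds = ds" by simp
      then have "pcomp x i y = x" using xe ye \<open>es = [e]\<close> by (simp add: pcomp_def)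
      then show ?thesis using x by auto
    qed
  qed
  show "pcomp x i y \<in> Bulle - {g}" using inB ne by auto
qed (auto)

theorem proposition2p3:
  shows "card arity2_bubbles = 8 \<and>
         generated_suboperad arity2_bubbles = Bulle \<and>
         (\<forall>H. H \<subset> arity2_bubbles \<longrightarrow> generated_suboperad H \<noteq> Bulle)"
proof (intro conjI allI impI card8 gen_all)
  fix H assume H: "H \<subset> arity2_bubbles"
  then obtain g where g: "g \<in> arity2_bubbles" "g \<notin> H" by auto
  have "generated_suboperad H \<subseteq> Bulle - {g}"
    using gen_le[OF minus_sub[OF g(1)]] H g by (auto simp: arity2_bubbles_def)
  moreover have "g \<in> Bulle" using g by (auto simp: arity2_bubbles_def)
  ultimately show "generated_suboperad H \<noteq> Bulle" by auto
qed

end
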